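(* Let $\Gamma$ be a torsion-free word hyperbolic group and $\langle w \rangle$ a maximal cyclic subgroup of $\Gamma$. Suppose that $\rho:\Gamma \to \mathsf{GL}(d, \mathbb{R})$ is a projective Anosov representation. Then there exists $h \in \mathsf{GL}(d, \mathbb{R})$ such that for every $g \in \Gamma \smallsetminus \langle w \rangle$, the $(1,1)$, $(1,d)$, $(d,1)$ and $(d,d)$ entries of the matrix $h\rho(g)h^{-1}$ are non-zero.
   Context: Fix a word length $|\cdot|$ on $\Gamma$. For a matrix $A$, $\sigma_1(A)\ge\sigma_2(A)\ge\dots$ denote its singular values. A representation $\rho:\Gamma\to\mathsf{GL}(d,\mathbb R)$ is projective Anosov if there are constants $C,a>0$ with $\sigma_1(\rho(\gamma))/\sigma_2(\rho(\gamma))\ge Ce^{a|\gamma|}$ for all $\gamma\in\Gamma$. A cyclic subgroup is maximal if it is not contained in a strictly larger cyclic subgroup. *)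

theory Defs
  imports "HOL-Algebra.Group" "HOL-Algebra.Generated_Groups" "Jordan_Normal_Form.Char_Poly"
    "HOL-Computational_Algebra.Polynomial"
begin

definition word_length :: "('g, 'b) monoid_scheme \<Rightarrow> 'g set \<Rightarrow> 'g \<Rightarrow> nat" where
  "word_length G S g = (LEAST n. \<exists>ws. length ws = n \<and> set ws \<subseteq> S \<union> (\<lambda>s. inv\<^bsub>G\<^esub> s) ` S
       \<and> foldr (\<lambda>x y. x \<otimes>\<^bsub>G\<^esub> y) ws \<one>\<^bsub>G\<^esub> = g)"

definition word_dist :: "('g, 'b) monoid_scheme \<Rightarrow> 'g set \<Rightarrow> 'g \<Rightarrow> 'g \<Rightarrow> real" where
  "word_dist G S x y = real (word_length G S (inv\<^bsub>G\<^esub> x \<otimes>\<^bsub>G\<^esub> y))"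

definition gromov_product :: "('g, 'b) monoid_scheme \<Rightarrow> 'g set \<Rightarrow> 'g \<Rightarrow> 'g \<Rightarrow> 'g \<Rightarrow> real" where
  "gromov_product G S w x y = (word_dist G S x w + word_dist G S y w - word_dist G S x y) / 2"

definition finite_generating_set :: "('g, 'b) monoid_scheme \<Rightarrow> 'g set \<Rightarrow> bool" where
  "finite_generating_set G S \<longleftrightarrow> finite S \<and> S \<subseteq> carrier G \<and> generate G S = carrier G"

text \<open>Word hyperbolic: the word metric (equivalently the Cayley graph) is Gromov hyperbolic,
  stated via the four-point condition on Gromov products.\<close>
definition word_hyperbolic :: "('g, 'b) monoid_scheme \<Rightarrow> 'g set \<Rightarrow> bool" where
  "word_hyperbolic G S \<longleftrightarrow> group G \<and> finite_generating_set G S \<and>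
     (\<exists>\<delta>::real. \<delta> \<ge> 0 \<and> (\<forall>w\<in>carrier G. \<forall>x\<in>carrier G. \<forall>y\<in>carrier G. \<forall>z\<in>carrier G.
        gromov_product G S w x z \<ge> min (gromov_product G S w x y) (gromov_product G S w y z) - \<delta>))"

definition torsion_free :: "('g, 'b) monoid_scheme \<Rightarrow> bool" where
  "torsion_free G \<longleftrightarrow> (\<forall>g\<in>carrier G. g \<noteq> \<one>\<^bsub>G\<^esub> \<longrightarrow> (\<forall>n::nat. n > 0 \<longrightarrow> g [^]\<^bsub>G\<^esub> n \<noteq> \<one>\<^bsub>G\<^esub>))"

definition maximal_cyclic :: "('g, 'b) monoid_scheme \<Rightarrow> 'g \<Rightarrow> bool" where
  "maximal_cyclic G w \<longleftrightarrow> w \<in> carrier G \<and>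
     (\<forall>u\<in>carrier G. generate G {w} \<subseteq> generate G {u} \<longrightarrow> generate G {w} = generate G {u})"

definition singular_values :: "real mat \<Rightarrow> real list" where
  "singular_values A = map sqrt (rev (sorted_list_of_multiset (proots (char_poly (transpose_mat A * A)))))"

text \<open>sigma k A for k \<ge> 1 is the k-th largest singular value.\<close>
definition sigma :: "nat \<Rightarrow> real mat \<Rightarrow> real" where
  "sigma k A = singular_values A ! (k - 1)"

definition GL_rep :: "('g, 'b) monoid_scheme \<Rightarrow> nat \<Rightarrow> ('g \<Rightarrow> real mat) \<Rightarrow> bool" where
  "GL_rep G d \<rho> \<longleftrightarrow> (\<forall>g\<in>carrier G. \<rho> g \<in> carrier_mat d d \<and> invertible_mat (\<rho> g)) \<and>
     (\<forall>g\<in>carrier G. \<forall>h\<in>carrier G. \<rho> (g \<otimes>\<^bsub>G\<^esub> h) = \<rho> g * \<rho> h)"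

definition projective_anosov :: "('g, 'b) monoid_scheme \<Rightarrow> 'g set \<Rightarrow> nat \<Rightarrow> ('g \<Rightarrow> real mat) \<Rightarrow> bool" where
  "projective_anosov G S d \<rho> \<longleftrightarrow> d \<ge> 2 \<and> GL_rep G d \<rho> \<and>
     (\<exists>C a::real. C > 0 \<and> a > 0 \<and> (\<forall>g\<in>carrier G.
        sigma 1 (\<rho> g) / sigma 2 (\<rho> g) \<ge> C * exp (a * real (word_length G S g))))"

end

theory Submission
  imports Defs "HOL-Analysis.Continuum_Not_Denumerable" "HOL-Library.Countable_Set"
begin

inductive polyfun :: "nat \<Rightarrow> ((nat \<Rightarrow> real) \<Rightarrow> real) \<Rightarrow> bool" for n where
  pf_const: "polyfun n (\<lambda>x. c)"
| pf_var: "i < n \<Longrightarrow> polyfun n (\<lambda>x. x i)"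
| pf_add: "polyfun n p \<Longrightarrow> polyfun n q \<Longrightarrow> polyfun n (\<lambda>x. p x + q x)"
| pf_mult: "polyfun n p \<Longrightarrow> polyfun n q \<Longrightarrow> polyfun n (\<lambda>x. p x * q x)"

lemma pf_sum: "finite A \<Longrightarrow> (\<And>a. a \<in> A \<Longrightarrow> polyfun n (f a)) \<Longrightarrow> polyfun n (\<lambda>x. \<Sum>a\<in>A. f a x)"
proof (induction A rule: finite_induct)
  case empty then show ?case using pf_const[of n 0] by simp
next
  case (insert a A)
  then show ?case using pf_add[of n "f a" "\<lambda>x. \<Sum>a\<in>A. f a x"] by simp
qed

lemma pf_prod: "finite A \<Longrightarrow> (\<And>a. a \<in> A \<Longrightarrow> polyfun n (f a)) \<Longrightarrow> polyfun n (\<lambda>x. \<Prod>a\<in>A. f a x)"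
proof (induction A rule: finite_induct)
  case empty then show ?case using pf_const[of n 1] by simp
next
  case (insert a A)
  then show ?case using pf_mult[of n "f a" "\<lambda>x. \<Prod>a\<in>A. f a x"] by simp
qed

lemma pf_mono: "polyfun n p \<Longrightarrow> polyfun (Suc n) p"
  by (induction rule: polyfun.induct) (auto intro: polyfun.intros)

lemma pf_local: "polyfun n p \<Longrightarrow> (\<And>i. i < n \<Longrightarrow> x i = y i) \<Longrightarrow> p x = p y"
  by (induction rule: polyfun.induct) auto

lemma pf_decomp:
  assumes "polyfun (Suc n) p"
  shows "\<exists>Q. (\<forall>k. polyfun n (\<lambda>x. coeff (Q x) k)) \<and> (\<forall>x. p x = poly (Q x) (x n))"
  using assms
proof (induction rule: polyfun.induct)
  case (pf_const c)
  show ?case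
    apply (rule exI[of _ "\<lambda>x. [:c:]"])
    apply (auto simp: coeff_pCons split: nat.split intro: polyfun.intros)
    done
next
  case (pf_var i)
  show ?case
  proof (cases "i = n")
    case True
    show ?thesis
      apply (rule exI[of _ "\<lambda>x. [:0,1:]"])
      using True apply (auto simp: coeff_pCons split: nat.split intro: polyfun.intros)
      done
  next
    case False
    with pf_var have "i < n" by simp
    show ?thesis
      apply (rule exI[of _ "\<lambda>x. [:x i:]"])
      apply (intro conjI allI)
      subgoal for k using \<open>i < n\<close> by (cases k) (auto simp: coeff_pCons intro: polyfun.intros)
      by simp
  qed
next
  case (pf_add p q)
  then obtain P Q where P: "\<forall>k. polyfun n (\<lambda>x. coeff (P x) k)" "\<forall>x. p x = poly (P x) (x n)"
    and Q: "\<forall>k. polyfun n (\<lambda>x. coeff (Q x) k)" "\<forall>x. q x = poly (Q x) (x n)" by blast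
  show ?case
    apply (rule exI[of _ "\<lambda>x. P x + Q x"])
    using P Q by (auto intro: polyfun.intros)
next
  case (pf_mult p q)
  then obtain P Q where P: "\<forall>k. polyfun n (\<lambda>x. coeff (P x) k)" "\<forall>x. p x = poly (P x) (x n)"
    and Q: "\<forall>k. polyfun n (\<lambda>x. coeff (Q x) k)" "\<forall>x. q x = poly (Q x) (x n)" by blast
  have "polyfun n (\<lambda>x. coeff (P x * Q x) k)" for k
    unfolding coeff_mult
    by (rule pf_sum) (use P Q in \<open>auto intro: polyfun.intros\<close>)
  then show ?case
    apply (intro exI[of _ "\<lambda>x. P x * Q x"])
    using P Q by auto
qed

lemma pf_avoid:
  assumes "countable F" "\<And>p. p \<in> F \<Longrightarrow> polyfun n p" "\<And>p. p \<in> F \<Longrightarrow> \<exists>x. p x \<noteq> 0"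
  shows "\<exists>x. \<forall>p\<in>F. p x \<noteq> 0"
  using assms
proof (induction n arbitrary: F)
  case 0
  have "p x = p y" if "p \<in> F" for p x y using pf_local[OF 0(2)[OF that]] by simp
  then show ?case using 0(3) by metis
next
  case (Suc n)
  have "\<exists>Q k. (\<forall>k. polyfun n (\<lambda>x. coeff (Q x) k)) \<and> (\<forall>x. p x = poly (Q x) (x n)) \<and>
     (\<exists>x. coeff (Q x) k \<noteq> 0)" if pF: "p \<in> F" for p
  proof -
    obtain Q where Q: "\<forall>k. polyfun n (\<lambda>x. coeff (Q x) k)" "\<forall>x. p x = poly (Q x) (x n)"
      using pf_decomp Suc.prems(2)[OF pF] by blast
    obtain x where "p x \<noteq> 0" using Suc.prems(3)[OF pF] by blast
    then have "Q x \<noteq> 0" using Q by auto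
    then obtain k where "coeff (Q x) k \<noteq> 0" by (metis leading_coeff_0_iff)
    then show ?thesis using Q by blast
  qed
  then obtain Q K where QK: "\<And>p. p \<in> F \<Longrightarrow> (\<forall>k. polyfun n (\<lambda>x. coeff (Q p x) k)) \<and> (\<forall>x. p x = poly (Q p x) (x n)) \<and>
     (\<exists>x. coeff (Q p x) (K p) \<noteq> 0)" by metis
  define F' where "F' = (\<lambda>p x. coeff (Q p x) (K p)) ` F"
  have "\<exists>x. \<forall>c\<in>F'. c x \<noteq> 0"
    apply (rule Suc.IH)
    using Suc.prems(1) QK unfolding F'_def by auto
  then obtain x0 where x0: "\<And>p. p \<in> F \<Longrightarrow> coeff (Q p x0) (K p) \<noteq> 0" unfolding F'_def by auto
  have Qeq: "Q p (x0(n := t)) = Q p x0" if "p \<in> F" for p t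
  proof (rule poly_eqI)
    fix k show "coeff (Q p (x0(n := t))) k = coeff (Q p x0) k"
      using pf_local[of n "\<lambda>x. coeff (Q p x) k" "x0(n := t)" x0] QK[OF that] by auto
  qed
  have nz: "Q p x0 \<noteq> 0" if "p \<in> F" for p using x0[OF that] by auto
  define R where "R = (\<Union>p\<in>F. {t. poly (Q p x0) t = 0})"
  have "countable R" unfolding R_def
    using Suc.prems(1) nz poly_roots_finite by (intro countable_UN) (auto intro!: countable_finite)
  then obtain t where t: "t \<notin> R"
    using uncountable_UNIV_real by (metis UNIV_I countableI_type subsetI countable_subset)
  show ?case
  proof (intro exI ballI)
    fix p assume "p \<in> F"
    have "p (x0(n := t)) = poly (Q p x0) t" using QK[OF \<open>p \<in> F\<close>] Qeq[OF \<open>p \<in> F\<close>] by simp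
    then show "p (x0(n := t)) \<noteq> 0" using t \<open>p \<in> F\<close> unfolding R_def by auto
  qed
qed


lemma pf_det:
  assumes "\<And>x. M x \<in> carrier_mat m m"
    and "\<And>i j. i < m \<Longrightarrow> j < m \<Longrightarrow> polyfun n (\<lambda>x. M x $$ (i, j))"
  shows "polyfun n (\<lambda>x. det (M x))"
proof -
  have "det (M x) = (\<Sum> p \<in> {p. p permutes {0 ..< m}}. signof p * (\<Prod> i = 0 ..< m. M x $$ (i, p i)))" for x
    using assms(1)[of x] unfolding det_def by auto
  moreover have "polyfun n (\<lambda>x. \<Sum> p \<in> {p. p permutes {0 ..< m}}. signof p * (\<Prod> i = 0 ..< m. M x $$ (i, p i)))"
  proof (rule pf_sum)
    show "finite {p. p permutes {0 ..< m}}" by (simp add: finite_permutations)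
    fix p assume "p \<in> {p. p permutes {0 ..< m}}"
    then have p: "\<And>i. i < m \<Longrightarrow> p i < m" by (auto simp: permutes_in_image)
    show "polyfun n (\<lambda>x. signof p * (\<Prod> i = 0 ..< m. M x $$ (i, p i)))"
      by (rule pf_mult, rule pf_const, rule pf_prod) (use p assms(2) in auto)
  qed
  ultimately show ?thesis by simp
qed

definition Hm :: "nat \<Rightarrow> (nat \<Rightarrow> real) \<Rightarrow> real mat" where
  "Hm d x = mat d d (\<lambda>(i,j). x (i*d+j))"

lemma Hm_carrier[simp]: "Hm d x \<in> carrier_mat d d" unfolding Hm_def by simp

lemma Hm_dims[simp]: "dim_row (Hm d x) = d" "dim_col (Hm d x) = d" unfolding Hm_def by simp_all

lemma idx_lt: "i < d \<Longrightarrow> j < d \<Longrightarrow> i*d+j < d*(d::nat)"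
proof -
  assume "i < d" "j < d"
  then have "i*d + j < i*d + d" by simp
  also have "\<dots> = (Suc i) * d" by simp
  also have "\<dots> \<le> d * d" using \<open>i < d\<close> mult_le_mono1[of "Suc i" d d] by simp
  finally show ?thesis .
qed

lemma pf_Hm: "i < d \<Longrightarrow> j < d \<Longrightarrow> polyfun (d*d) (\<lambda>x. Hm d x $$ (i,j))"
  unfolding Hm_def using idx_lt by (auto intro: pf_var)

lemma pf_det_Hm: "polyfun (d*d) (\<lambda>x. det (Hm d x))"
  by (rule pf_det[OF Hm_carrier pf_Hm])

lemma pf_adj_Hm: assumes "i < d" "j < d" shows "polyfun (d*d) (\<lambda>x. adj_mat (Hm d x) $$ (i,j))"
proof -
  have eq: "adj_mat (Hm d x) $$ (i,j) = (-1)^(j+i) * det (mat_delete (Hm d x) j i)" for x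
    using assms unfolding adj_mat_def cofactor_def by (simp add: Hm_def)
  have "polyfun (d*d) (\<lambda>x. det (mat_delete (Hm d x) j i))"
  proof (rule pf_det)
    show "mat_delete (Hm d x) j i \<in> carrier_mat (d-1) (d-1)" for x
      by (rule mat_delete_carrier[OF Hm_carrier])
    fix a b assume ab: "a < d-1" "b < d-1"
    have e: "mat_delete (Hm d x) j i $$ (a,b) = Hm d x $$ (if a < j then a else Suc a, if b < i then b else Suc b)" for x
      using ab unfolding mat_delete_def by (simp add: Hm_def)
    show "polyfun (d*d) (\<lambda>x. mat_delete (Hm d x) j i $$ (a,b))"
      unfolding e by (rule pf_Hm) (use ab in auto)
  qed
  then show ?thesis unfolding eq by (intro pf_mult pf_const)
qed

lemma pf_corner:
  assumes A: "A \<in> carrier_mat d d" and "i < d" "j < d"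
  shows "polyfun (d*d) (\<lambda>x. (Hm d x * A * adj_mat (Hm d x)) $$ (i,j))"
proof -
  have eq: "(Hm d x * A * adj_mat (Hm d x)) $$ (i,j) =
     (\<Sum>l\<in>{0..<d}. (\<Sum>k\<in>{0..<d}. Hm d x $$ (i,k) * A $$ (k,l)) * adj_mat (Hm d x) $$ (l,j))" for x
  proof -
    have c: "Hm d x * A \<in> carrier_mat d d" using A by (metis Hm_carrier mult_carrier_mat)
    have "(Hm d x * A * adj_mat (Hm d x)) $$ (i,j) = (\<Sum>l\<in>{0..<d}. (Hm d x * A) $$ (i,l) * adj_mat (Hm d x) $$ (l,j))"
      using assms c adj_mat(1)[OF Hm_carrier[of d x]] by (subst index_mult_mat) (auto simp: scalar_prod_def)
    moreover have "(Hm d x * A) $$ (i,l) = (\<Sum>k\<in>{0..<d}. Hm d x $$ (i,k) * A $$ (k,l))" if "l < d" for l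
      using assms that by (subst index_mult_mat) (auto simp: scalar_prod_def)
    ultimately show ?thesis by simp
  qed
  show ?thesis unfolding eq
    by (intro pf_sum pf_mult pf_const pf_Hm pf_adj_Hm finite_atLeastLessThan) (use assms in auto)
qed


definition conjto :: "nat \<Rightarrow> real mat \<Rightarrow> real mat \<Rightarrow> bool" where
  "conjto d A B \<longleftrightarrow> (\<exists>h hi. h \<in> carrier_mat d d \<and> hi \<in> carrier_mat d d \<and> h * hi = 1\<^sub>m d \<and> hi * h = 1\<^sub>m d \<and> B = h * A * hi)"

lemma conjto_refl: "A \<in> carrier_mat d d \<Longrightarrow> conjto d A A"
  unfolding conjto_def by (rule exI[of _ "1\<^sub>m d"], rule exI[of _ "1\<^sub>m d"]) auto

lemma conjto_carrier: "A \<in> carrier_mat d d \<Longrightarrow> conjto d A B \<Longrightarrow> B \<in> carrier_mat d d"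
  unfolding conjto_def by auto

lemma conjto_trans:
  assumes A: "A \<in> carrier_mat d d" and "conjto d A B" "conjto d B C" shows "conjto d A C"
proof -
  obtain h hi where h: "h \<in> carrier_mat d d" "hi \<in> carrier_mat d d" "h * hi = 1\<^sub>m d" "hi * h = 1\<^sub>m d" "B = h * A * hi"
    using assms(2) unfolding conjto_def by blast
  obtain k ki where k: "k \<in> carrier_mat d d" "ki \<in> carrier_mat d d" "k * ki = 1\<^sub>m d" "ki * k = 1\<^sub>m d" "C = k * B * ki"
    using assms(3) unfolding conjto_def by blast
  have "(k * h) * (hi * ki) = k * (h * (hi * ki))" using h k by (meson assoc_mult_mat mult_carrier_mat)
  also have "h * (hi * ki) = (h * hi) * ki" using h k assoc_mult_mat[of h d d hi d ki d] by simp
  finally have 1: "(k * h) * (hi * ki) = 1\<^sub>m d" using h k by simp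
  have "(hi * ki) * (k * h) = hi * (ki * (k * h))" using h k by (meson assoc_mult_mat mult_carrier_mat)
  also have "ki * (k * h) = (ki * k) * h" using h k assoc_mult_mat[of ki d d k d h d] by simp
  finally have 2: "(hi * ki) * (k * h) = 1\<^sub>m d" using h k by simp
  have "C = k * (h * A * hi) * ki" using h k by simp
  also have "k * (h * A * hi) = (k * (h * A)) * hi" using h k A assoc_mult_mat[of k d d "h*A" d hi d] by simp
  also have "k * (h * A) = (k * h) * A" using h k A assoc_mult_mat[of k d d h d A d] by simp
  also have "((k * h) * A) * hi * ki = ((k * h) * A) * (hi * ki)" using h k A assoc_mult_mat[of "k*h*A" d d hi d ki d] by simp
  finally have 3: "C = (k * h) * A * (hi * ki)" .
  show ?thesis unfolding conjto_def using 1 2 3 h k by (intro exI[of _ "k*h"] exI[of _ "hi*ki"]) auto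
qed

lemma conj_entry:
  assumes A: "A \<in> carrier_mat d d" and "i < d" "j < d"
  shows "(mat d d f * A * mat d d g) $$ (i,j) = (\<Sum>l\<in>{0..<d}. (\<Sum>k\<in>{0..<d}. f (i,k) * A $$ (k,l)) * g (l,j))"
proof -
  have c: "mat d d f * A \<in> carrier_mat d d" using A by (metis mat_carrier mult_carrier_mat)
  have "(mat d d f * A * mat d d g) $$ (i,j) = (\<Sum>l\<in>{0..<d}. (mat d d f * A) $$ (i,l) * g (l,j))"
    using assms c by (subst index_mult_mat) (auto simp: scalar_prod_def)
  moreover have "(mat d d f * A) $$ (i,l) = (\<Sum>k\<in>{0..<d}. f (i,k) * A $$ (k,l))" if "l < d" for l
    using assms that by (subst index_mult_mat) (auto simp: scalar_prod_def)
  ultimately show ?thesis by simp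
qed

lemma sd1: "x < (d::nat) \<Longrightarrow> (\<Sum>k\<in>{0..<d}. (if x = k then 1 else 0) * f k) = (f x :: real)"
proof -
  assume "x < d"
  have "(\<Sum>k\<in>{0..<d}. (if x = k then 1 else 0) * f k) = (\<Sum>k\<in>{0..<d}. if k = x then f k else 0)"
    by (rule sum.cong) auto
  also have "\<dots> = f x" using \<open>x < d\<close> by (subst sum.delta) (auto simp: atLeastLessThan_iff)
  finally show ?thesis .
qed

lemma sd2: "y < (d::nat) \<Longrightarrow> (\<Sum>k\<in>{0..<d}. f k * (if k = y then 1 else 0)) = (f y :: real)"
proof -
  assume "y < d"
  have "(\<Sum>k\<in>{0..<d}. f k * (if k = y then 1 else 0)) = (\<Sum>k\<in>{0..<d}. if k = y then f k else 0)"
    by (rule sum.cong) auto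
  also have "\<dots> = f y" using \<open>y < d\<close> by (subst sum.delta) (auto simp: atLeastLessThan_iff)
  finally show ?thesis .
qed

lemma sd3: "b < (d::nat) \<Longrightarrow> (\<Sum>k\<in>{0..<d}. (if P \<and> k = b then c else 0) * f k) = (if P then c * f b else (0::real))"
proof -
  assume "b < d"
  have "(\<Sum>k\<in>{0..<d}. (if P \<and> k = b then c else 0) * f k) = (\<Sum>k\<in>{0..<d}. if k = b then (if P then c * f k else 0) else 0)"
    by (rule sum.cong) auto
  also have "\<dots> = (if P then c * f b else 0)" using \<open>b < d\<close> by (subst sum.delta) (auto simp: atLeastLessThan_iff)
  finally show ?thesis .
qed

lemma sd4: "a < (d::nat) \<Longrightarrow> (\<Sum>k\<in>{0..<d}. f k * (if k = a \<and> P then c else 0)) = (if P then f a * c else (0::real))"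
proof -
  assume "a < d"
  have "(\<Sum>k\<in>{0..<d}. f k * (if k = a \<and> P then c else 0)) = (\<Sum>k\<in>{0..<d}. if k = a then (if P then f k * c else 0) else 0)"
    by (rule sum.cong) auto
  also have "\<dots> = (if P then f a * c else 0)" using \<open>a < d\<close> by (subst sum.delta) (auto simp: atLeastLessThan_iff)
  finally show ?thesis .
qed

definition Em :: "nat \<Rightarrow> real \<Rightarrow> nat \<Rightarrow> nat \<Rightarrow> real mat" where
  "Em d s a b = mat d d (\<lambda>(x,y). (if x = y then 1 else 0) + (if x = a \<and> y = b then s else 0))"

lemma Em_inv: assumes "a \<noteq> b" "a < d" "b < d" shows "Em d s a b * Em d (-s) a b = 1\<^sub>m d"
proof (rule eq_matI)
  fix x y assume xy: "x < dim_row (1\<^sub>m d :: real mat)" "y < dim_col (1\<^sub>m d :: real mat)"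
  then have "(Em d s a b * Em d (-s) a b) $$ (x,y) = (\<Sum>k\<in>{0..<d}.
     ((if x = k then 1 else 0) + (if x = a \<and> k = b then s else 0)) * ((if k = y then 1 else 0) + (if k = a \<and> y = b then -s else 0)))"
    unfolding Em_def by (simp add: scalar_prod_def)
  also have "\<dots> = (\<Sum>k\<in>{0..<d}. (if x = k then 1 else 0) * (if k = y then 1 else 0)) +
     (\<Sum>k\<in>{0..<d}. (if x = k then 1 else 0) * (if k = a \<and> y = b then -s else 0)) +
     (\<Sum>k\<in>{0..<d}. (if x = a \<and> k = b then s else 0) * (if k = y then 1 else 0)) +
     (\<Sum>k\<in>{0..<d}. (if x = a \<and> k = b then s else 0) * (if k = a \<and> y = b then -s else 0))"
    by (simp add: algebra_simps sum.distrib)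
  also have "\<dots> = 1\<^sub>m d $$ (x,y)" proof -
    have "x < d" "y < d" using xy by auto
    then show ?thesis using assms by (simp only: sd1 sd2 sd3 sd4) auto
  qed
  finally show "(Em d s a b * Em d (-s) a b) $$ (x,y) = 1\<^sub>m d $$ (x,y)" .
qed (auto simp: Em_def)


lemma Em_carrier[simp]: "Em d s a b \<in> carrier_mat d d" unfolding Em_def by simp

lemma Em_conj_entry:
  assumes A: "A \<in> carrier_mat d d" and ab: "a \<noteq> b" "a < d" "b < d" and ij: "i < d" "j < d"
  shows "(Em d s a b * A * Em d (-s) a b) $$ (i,j) = A $$ (i,j) + (if i = a then s * A $$ (b,j) else 0)
     + (if j = b then (A $$ (i,a) + (if i = a then s * A $$ (b,a) else 0)) * (-s) else 0)"
proof -
  have inner: "(\<Sum>k\<in>{0..<d}. ((if i = k then 1 else 0) + (if i = a \<and> k = b then s else 0)) * A $$ (k,l))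
     = A $$ (i,l) + (if i = a then s * A $$ (b,l) else 0)" for l
    using ij ab by (simp only: distrib_right sum.distrib sd1 sd3)
  have "(Em d s a b * A * Em d (-s) a b) $$ (i,j) = (\<Sum>l\<in>{0..<d}.
     (A $$ (i,l) + (if i = a then s * A $$ (b,l) else 0)) * ((if l = j then 1 else 0) + (if l = a \<and> j = b then -s else 0)))"
    unfolding Em_def by (subst conj_entry[OF A ij]) (simp add: inner)
  also have "\<dots> = A $$ (i,j) + (if i = a then s * A $$ (b,j) else 0)
     + (if j = b then (A $$ (i,a) + (if i = a then s * A $$ (b,a) else 0)) * (-s) else 0)"
    using ij ab by (simp only: distrib_left sum.distrib sd2 sd4)
  finally show ?thesis .
qed

lemma Em_inv2: assumes "a \<noteq> b" "a < d" "b < d" shows "Em d (-s) a b * Em d s a b = 1\<^sub>m d"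
  using Em_inv[OF assms, of "-s"] by simp

lemma conjto_Em: assumes "A \<in> carrier_mat d d" "a \<noteq> b" "a < d" "b < d"
  shows "conjto d A (Em d s a b * A * Em d (-s) a b)"
  unfolding conjto_def using Em_inv[OF assms(2-4)] Em_inv2[OF assms(2-4)]
  by (intro exI[of _ "Em d s a b"] exI[of _ "Em d (-s) a b"]) auto

definition sw :: "nat \<Rightarrow> nat \<Rightarrow> nat \<Rightarrow> nat" where
  "sw p q x = (if x = p then q else if x = q then p else x)"

lemma sw_sw[simp]: "sw p q (sw p q x) = x" unfolding sw_def by auto
lemma sw_lt: "p < d \<Longrightarrow> q < (d::nat) \<Longrightarrow> x < d \<Longrightarrow> sw p q x < d" unfolding sw_def by auto
lemma sw_eq_iff: "(y = sw p q x) = (x = sw p q y)" unfolding sw_def by auto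

definition Pm :: "nat \<Rightarrow> nat \<Rightarrow> nat \<Rightarrow> real mat" where
  "Pm d p q = mat d d (\<lambda>(x,y). if y = sw p q x then 1 else 0)"

lemma Pm_carrier[simp]: "Pm d p q \<in> carrier_mat d d" unfolding Pm_def by simp

lemma sd5: "c < (d::nat) \<Longrightarrow> (\<Sum>k\<in>{0..<d}. (if k = c then 1 else 0) * f k) = (f c :: real)"
proof -
  assume "c < d"
  have "(\<Sum>k\<in>{0..<d}. (if k = c then 1 else 0) * f k) = (\<Sum>k\<in>{0..<d}. if k = c then f k else 0)"
    by (rule sum.cong) auto
  also have "\<dots> = f c" using \<open>c < d\<close> by (subst sum.delta) (auto simp: atLeastLessThan_iff)
  finally show ?thesis .
qed

lemma Pm_inv: assumes "p < d" "q < d" shows "Pm d p q * Pm d p q = 1\<^sub>m d"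
proof (rule eq_matI)
  fix x y assume xy: "x < dim_row (1\<^sub>m d :: real mat)" "y < dim_col (1\<^sub>m d :: real mat)"
  then have x: "x < d" "y < d" by auto
  have "(Pm d p q * Pm d p q) $$ (x,y) = (\<Sum>k\<in>{0..<d}. (if k = sw p q x then 1 else 0) * (if y = sw p q k then 1 else 0))"
    using x unfolding Pm_def by (simp add: scalar_prod_def)
  also have "\<dots> = (if y = sw p q (sw p q x) then 1 else 0)"
    by (rule sd5, rule sw_lt) (use assms x in auto)
  also have "\<dots> = 1\<^sub>m d $$ (x,y)" using x by simp
  finally show "(Pm d p q * Pm d p q) $$ (x,y) = 1\<^sub>m d $$ (x,y)" .
qed (auto simp: Pm_def)

lemma Pm_conj_entry:
  assumes A: "A \<in> carrier_mat d d" and pq: "p < d" "q < d" and ij: "i < d" "j < d"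
  shows "(Pm d p q * A * Pm d p q) $$ (i,j) = A $$ (sw p q i, sw p q j)"
proof -
  have si: "sw p q i < d" "sw p q j < d" using sw_lt pq ij by auto
  have inner: "(\<Sum>k\<in>{0..<d}. (if k = sw p q i then 1 else 0) * A $$ (k,l)) = A $$ (sw p q i, l)" for l
    by (rule sd5[OF si(1)])
  have "(Pm d p q * A * Pm d p q) $$ (i,j) = (\<Sum>l\<in>{0..<d}. A $$ (sw p q i, l) * (if l = sw p q j then 1 else 0))"
    unfolding Pm_def by (subst conj_entry[OF A ij]) (simp add: inner sw_eq_iff[of j])
  also have "\<dots> = A $$ (sw p q i, sw p q j)" by (rule sd2[OF si(2)])
  finally show ?thesis .
qed

lemma conjto_Pm: assumes "A \<in> carrier_mat d d" "p < d" "q < d"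
  shows "conjto d A (Pm d p q * A * Pm d p q)"
  unfolding conjto_def using Pm_inv[OF assms(2-3)]
  by (intro exI[of _ "Pm d p q"] exI[of _ "Pm d p q"]) auto


lemma ex_diag:
  assumes A: "A \<in> carrier_mat d d" and i: "i < d" and col: "\<exists>b<d. A $$ (b,i) \<noteq> 0"
  shows "\<exists>B. conjto d A B \<and> B $$ (i,i) \<noteq> 0"
proof (cases "A $$ (i,i) = 0")
  case False
  then show ?thesis using conjto_refl[OF A] by blast
next
  case True
  obtain b where b0: "b < d" "A $$ (b,i) \<noteq> 0" using col by blast
  have b: "b < d" "b \<noteq> i" "A $$ (b,i) \<noteq> 0" using b0 True by auto
  have "(Em d 1 i b * A * Em d (-1) i b) $$ (i,i) = A $$ (b,i)"
    using Em_conj_entry[OF A, of i b i i 1] b i True by simp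
  then show ?thesis using conjto_Em[OF A, of i b 1] b i by auto
qed

lemma ex_offdiag0:
  assumes A: "A \<in> carrier_mat d d" and ns: "\<not> (\<exists>c. A = c \<cdot>\<^sub>m 1\<^sub>m d)" and d: "0 < d"
  shows "\<exists>k l B. k \<noteq> l \<and> k < d \<and> l < d \<and> conjto d A B \<and> B $$ (k,l) \<noteq> 0"
proof (cases "\<exists>k l. k \<noteq> l \<and> k < d \<and> l < d \<and> A $$ (k,l) \<noteq> 0")
  case True
  then obtain k l where "k \<noteq> l \<and> k < d \<and> l < d \<and> A $$ (k,l) \<noteq> 0" by blast
  then show ?thesis using conjto_refl[OF A] by (intro exI[of _ k] exI[of _ l] exI[of _ A]) simp
next
  case False
  have off: "A $$ (k,l) = 0" if "k \<noteq> l" "k < d" "l < d" for k l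
  proof (rule ccontr)
    assume "A $$ (k,l) \<noteq> 0"
    then have "\<exists>k l. k \<noteq> l \<and> k < d \<and> l < d \<and> A $$ (k,l) \<noteq> 0" using that by blast
    then show False using False by simp
  qed
  show ?thesis
  proof (cases "\<exists>k l. k < d \<and> l < d \<and> A $$ (k,k) \<noteq> A $$ (l,l)")
    case True
    then obtain k l where kl: "k < d" "l < d" "A $$ (k,k) \<noteq> A $$ (l,l)" by blast
    then have "k \<noteq> l" by auto
    have z: "A $$ (k,l) = 0" "A $$ (l,k) = 0" using off[of k l] off[of l k] \<open>k \<noteq> l\<close> kl(1,2) by auto
    have "(Em d 1 k l * A * Em d (-1) k l) $$ (k,l) = A $$ (k,l) + A $$ (l,l) - (A $$ (k,k) + A $$ (l,k))"
      using Em_conj_entry[OF A \<open>k \<noteq> l\<close> kl(1,2) kl(1,2), of 1] by simp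
    also have "\<dots> = A $$ (l,l) - A $$ (k,k)" using z by simp
    finally have "(Em d 1 k l * A * Em d (-1) k l) $$ (k,l) \<noteq> 0" using kl by simp
    then show ?thesis using conjto_Em[OF A \<open>k \<noteq> l\<close> kl(1,2), of 1] \<open>k \<noteq> l\<close> kl
      by (intro exI[of _ k] exI[of _ l] exI[of _ "Em d 1 k l * A * Em d (-1) k l"]) simp
  next
    case False
    note off' = off
    have dg: "A $$ (k,k) = A $$ (0,0)" if "k < d" for k
    proof (rule ccontr)
      assume "A $$ (k,k) \<noteq> A $$ (0,0)"
      then have "\<exists>k l. k < d \<and> l < d \<and> A $$ (k,k) \<noteq> A $$ (l,l)" using that d by blast
      then show False using False by simp
    qed
    have "A = A $$ (0,0) \<cdot>\<^sub>m 1\<^sub>m d"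
    proof (rule eq_matI)
      fix x y assume "x < dim_row (A $$ (0,0) \<cdot>\<^sub>m 1\<^sub>m d)" "y < dim_col (A $$ (0,0) \<cdot>\<^sub>m 1\<^sub>m d)"
      then have xy: "x < d" "y < d" by auto
      then show "A $$ (x,y) = (A $$ (0,0) \<cdot>\<^sub>m 1\<^sub>m d) $$ (x,y)"
        using off'[of x y] dg[of x] xy by (cases "x = y") auto
    qed (use A in auto)
    then show ?thesis using ns by blast
  qed
qed

lemma ex_offdiag:
  assumes A: "A \<in> carrier_mat d d" and ns: "\<not> (\<exists>c. A = c \<cdot>\<^sub>m 1\<^sub>m d)" and ij: "i < d" "j < d" "i \<noteq> j"
  shows "\<exists>B. conjto d A B \<and> B $$ (i,j) \<noteq> 0"
proof -
  obtain k l B where kl: "k \<noteq> l" "k < d" "l < d" "conjto d A B" "B $$ (k,l) \<noteq> 0"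
    using ex_offdiag0[OF A ns] ij by auto
  have B: "B \<in> carrier_mat d d" using conjto_carrier[OF A kl(4)] .
  define l' where "l' = sw i k l"
  have l': "l' < d" "l' \<noteq> i" using kl ij sw_lt unfolding l'_def sw_def by auto
  define C where "C = Pm d i k * B * Pm d i k"
  have C: "C \<in> carrier_mat d d" unfolding C_def using B by (metis Pm_carrier mult_carrier_mat)
  have CA: "conjto d A C" unfolding C_def using conjto_trans[OF A kl(4) conjto_Pm[OF B ij(1) kl(2)]] .
  have Cil: "C $$ (i, l') = B $$ (k,l)"
    unfolding C_def using Pm_conj_entry[OF B ij(1) kl(2) ij(1) l'(1)] unfolding l'_def by (simp add: sw_def)
  define D where "D = Pm d j l' * C * Pm d j l'"
  have DA: "conjto d A D" unfolding D_def using conjto_trans[OF A CA conjto_Pm[OF C ij(2) l'(1)]] .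
  have "D $$ (i,j) = C $$ (i, l')"
    unfolding D_def using Pm_conj_entry[OF C ij(2) l'(1) ij(1) ij(2)] ij l' by (simp add: sw_def)
  then show ?thesis using DA Cil kl by auto
qed

lemma conj_to_poly:
  assumes A: "A \<in> carrier_mat d d" and "conjto d A B" and "B $$ (i,j) \<noteq> 0" "i < d" "j < d"
  shows "\<exists>x. (Hm d x * A * adj_mat (Hm d x)) $$ (i,j) \<noteq> 0"
proof -
  obtain h hi where h: "h \<in> carrier_mat d d" "hi \<in> carrier_mat d d" "h * hi = 1\<^sub>m d" "hi * h = 1\<^sub>m d" "B = h * A * hi"
    using assms(2) unfolding conjto_def by blast
  define x where "x = (\<lambda>k. h $$ (k div d, k mod d))"
  have Hx: "Hm d x = h"
  proof (rule eq_matI)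
    fix a b assume "a < dim_row h" "b < dim_col h"
    then have ab: "a < d" "b < d" using h by auto
    then show "Hm d x $$ (a,b) = h $$ (a,b)" unfolding Hm_def x_def by simp
  qed (use h in auto)
  have "det h * det hi = 1" using det_mult[OF h(1) h(2)] h(3) by simp
  then have dh: "det h \<noteq> 0" by auto
  have "adj_mat h = adj_mat h * (h * hi)" using h adj_mat(1)[OF h(1)] by simp
  also have "\<dots> = (adj_mat h * h) * hi" using h adj_mat(1)[OF h(1)] by (simp add: assoc_mult_mat[of _ d d h d hi d])
  also have "\<dots> = det h \<cdot>\<^sub>m hi" using h adj_mat(3)[OF h(1)] by (simp add: mult_smult_assoc_mat[of _ d d hi d])
  finally have adj: "adj_mat h = det h \<cdot>\<^sub>m hi" .
  have "h * A * adj_mat h = det h \<cdot>\<^sub>m (h * A * hi)" unfolding adj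
    using h A by (simp add: mult_smult_distrib[of _ d d hi d])
  then have "(h * A * adj_mat h) $$ (i,j) = det h * B $$ (i,j)" using h A assms by simp
  then show ?thesis using dh assms Hx by (intro exI[of _ x]) simp
qed


lemma foldr_mult:
  assumes "group G" "set ws \<subseteq> carrier G" "y \<in> carrier G"
  shows "foldr (\<lambda>x y. x \<otimes>\<^bsub>G\<^esub> y) ws y = foldr (\<lambda>x y. x \<otimes>\<^bsub>G\<^esub> y) ws \<one>\<^bsub>G\<^esub> \<otimes>\<^bsub>G\<^esub> y
     \<and> foldr (\<lambda>x y. x \<otimes>\<^bsub>G\<^esub> y) ws \<one>\<^bsub>G\<^esub> \<in> carrier G"
  using assms(2)
proof (induction ws)
  case Nil then show ?case using assms by (simp add: group.is_monoid monoid.l_one)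
next
  case (Cons a ws)
  then show ?case using assms
    by (simp add: group.is_monoid monoid.m_assoc monoid.m_closed)
qed

lemma words_exist:
  assumes G: "group G" and S: "S \<subseteq> carrier G" and g: "g \<in> generate G S"
  shows "\<exists>ws. set ws \<subseteq> S \<union> (\<lambda>s. inv\<^bsub>G\<^esub> s) ` S \<and> foldr (\<lambda>x y. x \<otimes>\<^bsub>G\<^esub> y) ws \<one>\<^bsub>G\<^esub> = g"
  using g
proof (induction rule: generate.induct)
  case one
  then show ?case by (intro exI[of _ "[]"]) simp
next
  case (incl h)
  then show ?case using S G by (intro exI[of _ "[h]"]) (auto simp: group.is_monoid monoid.r_one)
next
  case (inv h)
  then show ?case using S G by (intro exI[of _ "[inv\<^bsub>G\<^esub> h]"]) (auto simp: group.is_monoid monoid.r_one group.inv_closed)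
next
  case (eng h1 h2)
  then obtain ws1 ws2 where w: "set ws1 \<subseteq> S \<union> (\<lambda>s. inv\<^bsub>G\<^esub> s) ` S" "foldr (\<lambda>x y. x \<otimes>\<^bsub>G\<^esub> y) ws1 \<one>\<^bsub>G\<^esub> = h1"
    "set ws2 \<subseteq> S \<union> (\<lambda>s. inv\<^bsub>G\<^esub> s) ` S" "foldr (\<lambda>x y. x \<otimes>\<^bsub>G\<^esub> y) ws2 \<one>\<^bsub>G\<^esub> = h2" by blast
  have T: "S \<union> (\<lambda>s. inv\<^bsub>G\<^esub> s) ` S \<subseteq> carrier G" using S G by (auto simp: group.inv_closed)
  have s2: "set ws2 \<subseteq> carrier G" using w(3) T by blast
  have c2: "h2 \<in> carrier G" using foldr_mult[OF G s2, of "\<one>\<^bsub>G\<^esub>"] w G by (auto simp: group.is_monoid monoid.one_closed)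
  have "foldr (\<lambda>x y. x \<otimes>\<^bsub>G\<^esub> y) (ws1 @ ws2) \<one>\<^bsub>G\<^esub> = foldr (\<lambda>x y. x \<otimes>\<^bsub>G\<^esub> y) ws1 h2"
    using w by simp
  also have "\<dots> = h1 \<otimes>\<^bsub>G\<^esub> h2"
  proof -
    have s1: "set ws1 \<subseteq> carrier G" using w(1) T by blast
    show ?thesis using foldr_mult[OF G s1 c2] w by simp
  qed
  finally show ?case using w by (intro exI[of _ "ws1 @ ws2"]) auto
qed

lemma word_length_word:
  assumes G: "group G" and fg: "finite_generating_set G S" and g: "g \<in> carrier G"
  shows "\<exists>ws. length ws = word_length G S g \<and> set ws \<subseteq> S \<union> (\<lambda>s. inv\<^bsub>G\<^esub> s) ` S
       \<and> foldr (\<lambda>x y. x \<otimes>\<^bsub>G\<^esub> y) ws \<one>\<^bsub>G\<^esub> = g"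
proof -
  have "\<exists>ws. set ws \<subseteq> S \<union> (\<lambda>s. inv\<^bsub>G\<^esub> s) ` S \<and> foldr (\<lambda>x y. x \<otimes>\<^bsub>G\<^esub> y) ws \<one>\<^bsub>G\<^esub> = g"
    using words_exist[OF G, of S g] fg g unfolding finite_generating_set_def by auto
  then have "\<exists>n ws. length ws = n \<and> set ws \<subseteq> S \<union> (\<lambda>s. inv\<^bsub>G\<^esub> s) ` S \<and> foldr (\<lambda>x y. x \<otimes>\<^bsub>G\<^esub> y) ws \<one>\<^bsub>G\<^esub> = g"
    by blast
  then show ?thesis unfolding word_length_def by (rule LeastI_ex)
qed

lemma ball_finite:
  assumes G: "group G" and fg: "finite_generating_set G S"
  shows "finite {g\<in>carrier G. word_length G S g \<le> R}"
proof -
  let ?T = "S \<union> (\<lambda>s. inv\<^bsub>G\<^esub> s) ` S"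
  have "finite ?T" using fg unfolding finite_generating_set_def by auto
  then have "finite ((\<lambda>ws. foldr (\<lambda>x y. x \<otimes>\<^bsub>G\<^esub> y) ws \<one>\<^bsub>G\<^esub>) ` {ws. set ws \<subseteq> ?T \<and> length ws \<le> R})"
    by (intro finite_imageI finite_lists_length_le)
  moreover have "{g\<in>carrier G. word_length G S g \<le> R} \<subseteq> (\<lambda>ws. foldr (\<lambda>x y. x \<otimes>\<^bsub>G\<^esub> y) ws \<one>\<^bsub>G\<^esub>) ` {ws. set ws \<subseteq> ?T \<and> length ws \<le> R}"
  proof
    fix g assume "g \<in> {g\<in>carrier G. word_length G S g \<le> R}"
    then show "g \<in> (\<lambda>ws. foldr (\<lambda>x y. x \<otimes>\<^bsub>G\<^esub> y) ws \<one>\<^bsub>G\<^esub>) ` {ws. set ws \<subseteq> ?T \<and> length ws \<le> R}"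
      using word_length_word[OF G fg, of g] by force
  qed
  ultimately show ?thesis by (rule finite_subset[rotated])
qed

lemma carrier_countable:
  assumes G: "group G" and fg: "finite_generating_set G S"
  shows "countable (carrier G)"
proof -
  let ?T = "S \<union> (\<lambda>s. inv\<^bsub>G\<^esub> s) ` S"
  have "countable ?T" using fg unfolding finite_generating_set_def by (auto intro: countable_finite)
  then have "countable ((\<lambda>ws. foldr (\<lambda>x y. x \<otimes>\<^bsub>G\<^esub> y) ws \<one>\<^bsub>G\<^esub>) ` lists ?T)" by auto
  moreover have "carrier G \<subseteq> (\<lambda>ws. foldr (\<lambda>x y. x \<otimes>\<^bsub>G\<^esub> y) ws \<one>\<^bsub>G\<^esub>) ` lists ?T"
  proof
    fix g assume "g \<in> carrier G"
    then show "g \<in> (\<lambda>ws. foldr (\<lambda>x y. x \<otimes>\<^bsub>G\<^esub> y) ws \<one>\<^bsub>G\<^esub>) ` lists ?T"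
      using word_length_word[OF G fg, of g] by (auto intro: image_eqI simp: in_listsI)
  qed
  ultimately show ?thesis by (rule countable_subset[rotated])
qed

lemma sv_scalar:
  assumes d: "d \<ge> 2" and c: "c \<noteq> 0"
  shows "sigma 1 (c \<cdot>\<^sub>m 1\<^sub>m d) / sigma 2 (c \<cdot>\<^sub>m 1\<^sub>m d) = 1"
proof -
  have sm: "(\<Sum>i\<in>{0..<d}. c * (if i = x then 1 else 0) * (c * (if i = y then 1 else 0))) = (if x = y then c * c else 0)"
    if "x < d" for x y
  proof -
    have "(\<Sum>i\<in>{0..<d}. c * (if i = x then 1 else 0) * (c * (if i = y then 1 else 0))) =
      (\<Sum>i\<in>{0..<d}. if i = x then (if x = y then c * c else 0) else 0)"
      by (rule sum.cong) auto
    also have "\<dots> = (if x = y then c * c else 0)" using that by (subst sum.delta) (auto simp: atLeastLessThan_iff)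
    finally show ?thesis .
  qed
  have tm: "transpose_mat (c \<cdot>\<^sub>m 1\<^sub>m d) * (c \<cdot>\<^sub>m 1\<^sub>m d) = (c * c) \<cdot>\<^sub>m 1\<^sub>m d"
    by (rule eq_matI) (auto simp: scalar_prod_def sm)
  have ut: "upper_triangular ((c * c) \<cdot>\<^sub>m 1\<^sub>m d)" unfolding upper_triangular_def by auto
  have "char_poly ((c * c) \<cdot>\<^sub>m 1\<^sub>m d) = (\<Prod> a \<leftarrow> diag_mat ((c * c) \<cdot>\<^sub>m 1\<^sub>m d). [:- a, 1:])"
    by (rule char_poly_upper_triangular[OF _ ut, of d]) simp
  also have "diag_mat ((c * c) \<cdot>\<^sub>m 1\<^sub>m d) = replicate d (c * c)"
    by (rule nth_equalityI) (auto simp: diag_mat_def)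
  finally have cp: "char_poly ((c * c) \<cdot>\<^sub>m 1\<^sub>m d) = [:- (c * c), 1:] ^ d"
    by (simp add: prod_list_replicate)
  have "proots ([:- (c * c), 1:] ^ d) = mset (replicate d (c * c))"
    by (simp add: proots_power)
  then have "singular_values (c \<cdot>\<^sub>m 1\<^sub>m d) = replicate d (sqrt (c * c))"
  proof -
    have "sorted_list_of_multiset (replicate_mset d (c*c)) = replicate d (c*c)"
      using sorted_list_of_multiset_mset[of "replicate d (c*c)"] by (simp add: sorted_sort_id)
    then show ?thesis unfolding singular_values_def tm cp by (simp add: proots_power)
  qed
  then show ?thesis using d c by (simp add: sigma_def)
qed


lemma col_nonzero:
  assumes A: "A \<in> carrier_mat d d" and inv: "invertible_mat A" and i: "i < d"
  shows "\<exists>b<d. A $$ (b,i) \<noteq> 0"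
proof (rule ccontr)
  assume "\<not> (\<exists>b<d. A $$ (b,i) \<noteq> 0)"
  then have z: "\<And>b. b < d \<Longrightarrow> A $$ (b,i) = 0" by auto
  obtain B where B: "B * A = 1\<^sub>m (dim_row B)" using inv unfolding invertible_mat_def inverts_mat_def by blast
  have "dim_row B = d" using arg_cong[OF B, of dim_col] A by simp
  then have "(B * A) $$ (i,i) = 1" using B i by simp
  moreover have "(B * A) $$ (i,i) = (\<Sum>k\<in>{0..<d}. row B i $ k * A $$ (k,i))"
    using A i \<open>dim_row B = d\<close> by (subst index_mult_mat) (auto simp: scalar_prod_def)
  moreover have "\<dots> = 0" using z by simp
  ultimately show False by simp
qed

lemma nonscalar:
  assumes G: "group G" and tf: "torsion_free G" and pa: "projective_anosov G S d \<rho>"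
    and fg: "finite_generating_set G S" and g: "g \<in> carrier G" "g \<noteq> \<one>\<^bsub>G\<^esub>"
  shows "\<not> (\<exists>c. \<rho> g = c \<cdot>\<^sub>m 1\<^sub>m d)"
proof
  assume "\<exists>c. \<rho> g = c \<cdot>\<^sub>m 1\<^sub>m d"
  then obtain c where c: "\<rho> g = c \<cdot>\<^sub>m 1\<^sub>m d" by blast
  have d: "d \<ge> 2" and rep: "GL_rep G d \<rho>" using pa unfolding projective_anosov_def by auto
  obtain C a where Ca: "C > 0" "a > 0" "\<And>g. g \<in> carrier G \<Longrightarrow> sigma 1 (\<rho> g) / sigma 2 (\<rho> g) \<ge> C * exp (a * real (word_length G S g))"
    using pa unfolding projective_anosov_def by blast
  have hom: "\<And>x y. x \<in> carrier G \<Longrightarrow> y \<in> carrier G \<Longrightarrow> \<rho> (x \<otimes>\<^bsub>G\<^esub> y) = \<rho> x * \<rho> y"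
    using rep unfolding GL_rep_def by blast
  have "c \<noteq> 0"
  proof
    assume "c = 0"
    have "\<exists>b<d. \<rho> g $$ (b,0) \<noteq> 0" using col_nonzero[of "\<rho> g" d 0] rep g d unfolding GL_rep_def by auto
    then show False using c \<open>c = 0\<close> by auto
  qed
  have pw: "\<rho> (g [^]\<^bsub>G\<^esub> Suc n) = (c ^ Suc n) \<cdot>\<^sub>m 1\<^sub>m d" for n
  proof (induction n)
    case 0
    have "g [^]\<^bsub>G\<^esub> Suc 0 = g" using G g by (simp add: group.is_monoid monoid.l_one)
    then show ?case using c by simp
  next
    case (Suc n)
    have "\<rho> (g [^]\<^bsub>G\<^esub> Suc (Suc n)) = \<rho> (g [^]\<^bsub>G\<^esub> Suc n) * \<rho> g"
    proof -
      have e: "g [^]\<^bsub>G\<^esub> Suc (Suc n) = g [^]\<^bsub>G\<^esub> Suc n \<otimes>\<^bsub>G\<^esub> g" by (rule nat_pow_Suc)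
      have gc: "g [^]\<^bsub>G\<^esub> Suc n \<in> carrier G" using G g by (simp add: group.is_monoid monoid.nat_pow_closed del: nat_pow_Suc)
      show ?thesis unfolding e by (rule hom[OF gc g(1)])
    qed
    also have "\<dots> = (c ^ Suc n) \<cdot>\<^sub>m 1\<^sub>m d * (c \<cdot>\<^sub>m 1\<^sub>m d)" using Suc c by simp
    also have "\<dots> = (c ^ Suc (Suc n)) \<cdot>\<^sub>m 1\<^sub>m d"
    proof -
      have "(c ^ Suc n) \<cdot>\<^sub>m 1\<^sub>m d * (c \<cdot>\<^sub>m 1\<^sub>m d) = (c ^ Suc n) \<cdot>\<^sub>m (1\<^sub>m d * (c \<cdot>\<^sub>m 1\<^sub>m d))"
        by (rule mult_smult_assoc_mat[of _ d d _ d]) auto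
      also have "1\<^sub>m d * (c \<cdot>\<^sub>m 1\<^sub>m d) = c \<cdot>\<^sub>m 1\<^sub>m d" by (rule left_mult_one_mat) auto
      also have "(c ^ Suc n) \<cdot>\<^sub>m (c \<cdot>\<^sub>m 1\<^sub>m d) = (c ^ Suc (Suc n)) \<cdot>\<^sub>m 1\<^sub>m d"
        by (rule eq_matI) (auto simp: algebra_simps)
      finally show ?thesis .
    qed
    finally show ?case .
  qed
  define R where "R = nat \<lceil>ln (1 / C) / a\<rceil>"
  have bnd: "word_length G S (g [^]\<^bsub>G\<^esub> Suc n) \<le> R" for n
  proof -
    have gc: "g [^]\<^bsub>G\<^esub> Suc n \<in> carrier G" using G g by (simp add: group.is_monoid monoid.nat_pow_closed del: nat_pow_Suc)
    have "sigma 1 (\<rho> (g [^]\<^bsub>G\<^esub> Suc n)) / sigma 2 (\<rho> (g [^]\<^bsub>G\<^esub> Suc n)) = 1"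
    proof -
      have "c ^ Suc n \<noteq> 0" using \<open>c \<noteq> 0\<close> by simp
      then show ?thesis unfolding pw by (rule sv_scalar[OF d])
    qed
    then have "C * exp (a * real (word_length G S (g [^]\<^bsub>G\<^esub> Suc n))) \<le> 1" using Ca(3)[OF gc] by simp
    then have "exp (a * real (word_length G S (g [^]\<^bsub>G\<^esub> Suc n))) \<le> 1 / C" using Ca by (simp add: field_simps)
    then have "ln (exp (a * real (word_length G S (g [^]\<^bsub>G\<^esub> Suc n)))) \<le> ln (1 / C)" using Ca
      by (subst ln_le_cancel_iff) auto
    then have "a * real (word_length G S (g [^]\<^bsub>G\<^esub> Suc n)) \<le> ln (1 / C)" by simp
    then have "real (word_length G S (g [^]\<^bsub>G\<^esub> Suc n)) \<le> ln (1 / C) / a" using Ca by (simp add: field_simps)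
    then show ?thesis unfolding R_def by linarith
  qed
  have sub: "range (\<lambda>n. g [^]\<^bsub>G\<^esub> Suc n) \<subseteq> {x\<in>carrier G. word_length G S x \<le> R}"
    using bnd G g by (auto simp: group.is_monoid monoid.nat_pow_closed simp del: nat_pow_Suc)
  have inj: "inj (\<lambda>n. g [^]\<^bsub>G\<^esub> Suc n)"
  proof (rule injI)
    have key: False if "m < n" "g [^]\<^bsub>G\<^esub> Suc m = g [^]\<^bsub>G\<^esub> Suc n" for m n
    proof -
      have "g [^]\<^bsub>G\<^esub> Suc n = g [^]\<^bsub>G\<^esub> Suc m \<otimes>\<^bsub>G\<^esub> g [^]\<^bsub>G\<^esub> (n - m)"
        using monoid.nat_pow_mult[OF group.is_monoid[OF G] g(1), of "Suc m" "n - m"] that by simp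
      moreover have c1: "g [^]\<^bsub>G\<^esub> Suc m \<in> carrier G" "g [^]\<^bsub>G\<^esub> (n - m) \<in> carrier G"
        using G g by (simp_all add: group.is_monoid monoid.nat_pow_closed del: nat_pow_Suc)
      ultimately have "g [^]\<^bsub>G\<^esub> (n - m) = \<one>\<^bsub>G\<^esub>" using that(2) group.l_cancel_one'[OF G c1] by simp
      then show False using tf g that unfolding torsion_free_def by auto
    qed
    fix m n assume "g [^]\<^bsub>G\<^esub> Suc m = g [^]\<^bsub>G\<^esub> Suc n"
    then show "m = n" using key[of m n] key[of n m] by (cases m n rule: linorder_cases) auto
  qed
  have "infinite (range (\<lambda>n. g [^]\<^bsub>G\<^esub> Suc n))" using inj by (simp add: finite_image_iff)
  then show False using finite_subset[OF sub ball_finite[OF G fg]] by simp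
qed


lemma Hm_of: "h \<in> carrier_mat d d \<Longrightarrow> Hm d (\<lambda>k. h $$ (k div d, k mod d)) = h"
  by (rule eq_matI) (auto simp: Hm_def)

theorem proposition3p1:
  fixes G :: "('g, 'b) monoid_scheme" and S :: "'g set" and w :: 'g
    and d :: nat and \<rho> :: "'g \<Rightarrow> real mat"
  assumes "group G"
    and "word_hyperbolic G S"
    and "torsion_free G"
    and "maximal_cyclic G w"
    and "projective_anosov G S d \<rho>"
  shows "\<exists>h hinv. h \<in> carrier_mat d d \<and> hinv \<in> carrier_mat d d \<and>
           h * hinv = 1\<^sub>m d \<and> hinv * h = 1\<^sub>m d \<and>
           (\<forall>g \<in> carrier G - generate G {w}.
              (h * \<rho> g * hinv) $$ (0, 0) \<noteq> 0 \<and>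
              (h * \<rho> g * hinv) $$ (0, d - 1) \<noteq> 0 \<and>
              (h * \<rho> g * hinv) $$ (d - 1, 0) \<noteq> 0 \<and>
              (h * \<rho> g * hinv) $$ (d - 1, d - 1) \<noteq> 0)"
proof -
  note G = assms(1)
  have fg: "finite_generating_set G S" using assms(2) unfolding word_hyperbolic_def by auto
  have d: "d \<ge> 2" and rep: "GL_rep G d \<rho>" using assms(5) unfolding projective_anosov_def by auto
  have rc: "\<rho> g \<in> carrier_mat d d" "invertible_mat (\<rho> g)" if "g \<in> carrier G" for g
    using rep that unfolding GL_rep_def by auto
  define Cs where "Cs = {(0::nat, 0::nat), (0, d - 1), (d - 1, 0), (d - 1, d - 1)}"
  have Cs: "i < d" "j < d" if "(i,j) \<in> Cs" for i j using that d unfolding Cs_def by auto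
  define X where "X = (carrier G - generate G {w}) \<times> Cs"
  define F where "F = insert (\<lambda>x. det (Hm d x)) ((\<lambda>(g,c) x. (Hm d x * \<rho> g * adj_mat (Hm d x)) $$ c) ` X)"
  have "countable X" unfolding X_def Cs_def
    using carrier_countable[OF G fg] by (auto intro!: countable_SIGMA)
  then have cF: "countable F" unfolding F_def by auto
  have pF: "polyfun (d*d) p" if pin: "p \<in> F" for p
  proof -
    consider "p = (\<lambda>x. det (Hm d x))" | g i j where "g \<in> carrier G" "(i,j) \<in> Cs"
      "p = (\<lambda>x. (Hm d x * \<rho> g * adj_mat (Hm d x)) $$ (i,j))"
      using pin unfolding F_def X_def by auto
    then show ?thesis
    proof cases
      case 1 then show ?thesis using pf_det_Hm by simp
    next
      case 2 then show ?thesis using pf_corner[OF rc(1)[OF 2(1)] Cs[OF 2(2)]] by simp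
    qed
  qed
  have nzF: "\<exists>x. p x \<noteq> 0" if pin: "p \<in> F" for p
  proof -
    consider "p = (\<lambda>x. det (Hm d x))" | g i j where "g \<in> carrier G" "g \<notin> generate G {w}" "(i,j) \<in> Cs"
      "p = (\<lambda>x. (Hm d x * \<rho> g * adj_mat (Hm d x)) $$ (i,j))"
      using pin unfolding F_def X_def by auto
    then show ?thesis
    proof cases
      case 1
      have "det (Hm d (\<lambda>k. (1\<^sub>m d :: real mat) $$ (k div d, k mod d))) = 1"
        by (subst Hm_of) auto
      then show ?thesis using 1 by (intro exI[of _ "\<lambda>k. (1\<^sub>m d :: real mat) $$ (k div d, k mod d)"]) auto
    next
      case 2
      have ij: "i < d" "j < d" using Cs[OF 2(3)] by auto
      have "g \<noteq> \<one>\<^bsub>G\<^esub>" using 2(2) generate.one[of G "{w}"] by auto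
      then have ns: "\<not> (\<exists>c. \<rho> g = c \<cdot>\<^sub>m 1\<^sub>m d)" using nonscalar[OF G assms(3,5) fg 2(1)] by blast
      have "\<exists>B. conjto d (\<rho> g) B \<and> B $$ (i,j) \<noteq> 0"
      proof (cases "i = j")
        case True
        then show ?thesis using ex_diag[OF rc(1)[OF 2(1)] ij(1) col_nonzero[OF rc[OF 2(1)] ij(1)]] by simp
      next
        case False
        then show ?thesis using ex_offdiag[OF rc(1)[OF 2(1)] ns ij] by simp
      qed
      then obtain B where "conjto d (\<rho> g) B" "B $$ (i,j) \<noteq> 0" by blast
      from conj_to_poly[OF rc(1)[OF 2(1)] this ij] show ?thesis using 2(4) by simp
    qed
  qed
  obtain x where x: "\<And>p. p \<in> F \<Longrightarrow> p x \<noteq> 0" using pf_avoid[OF cF pF nzF] by blast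
  define h where "h = Hm d x"
  have h: "h \<in> carrier_mat d d" unfolding h_def by simp
  have dh: "det h \<noteq> 0" using x[of "\<lambda>x. det (Hm d x)"] unfolding F_def h_def by auto
  define hinv where "hinv = (1 / det h) \<cdot>\<^sub>m adj_mat h"
  have hi: "hinv \<in> carrier_mat d d" unfolding hinv_def using adj_mat(1)[OF h] by simp
  have "h * hinv = (1 / det h) \<cdot>\<^sub>m (h * adj_mat h)" unfolding hinv_def
    using h adj_mat(1)[OF h] by (rule mult_smult_distrib)
  also have "\<dots> = 1\<^sub>m d" unfolding adj_mat(2)[OF h] using dh by (rule_tac eq_matI) auto
  finally have h1: "h * hinv = 1\<^sub>m d" .
  have "hinv * h = (1 / det h) \<cdot>\<^sub>m (adj_mat h * h)" unfolding hinv_def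
    using adj_mat(1)[OF h] h by (rule mult_smult_assoc_mat)
  also have "\<dots> = 1\<^sub>m d" unfolding adj_mat(3)[OF h] using dh by (rule_tac eq_matI) auto
  finally have h2: "hinv * h = 1\<^sub>m d" .
  have ent: "(h * \<rho> g * hinv) $$ (i,j) \<noteq> 0" if "g \<in> carrier G - generate G {w}" "(i,j) \<in> Cs" for g i j
  proof -
    have g: "g \<in> carrier G" using that by auto
    have ij: "i < d" "j < d" using Cs[OF that(2)] by auto
    have m: "h * \<rho> g \<in> carrier_mat d d" using h rc(1)[OF g] by simp
    have "h * \<rho> g * hinv = (1 / det h) \<cdot>\<^sub>m (h * \<rho> g * adj_mat h)" unfolding hinv_def
      using m adj_mat(1)[OF h] by (rule mult_smult_distrib)
    then have "(h * \<rho> g * hinv) $$ (i,j) = (1 / det h) * (h * \<rho> g * adj_mat h) $$ (i,j)"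
    proof -
      have "h * \<rho> g * adj_mat h \<in> carrier_mat d d" using m adj_mat(1)[OF h] by (rule mult_carrier_mat)
      then have "dim_row (h * \<rho> g * adj_mat h) = d" "dim_col (h * \<rho> g * adj_mat h) = d" by auto
      then show ?thesis using \<open>h * \<rho> g * hinv = _\<close> ij by (simp add: index_smult_mat)
    qed
    moreover have "(h * \<rho> g * adj_mat h) $$ (i,j) \<noteq> 0"
    proof -
      have "(g,(i,j)) \<in> X" using that unfolding X_def by auto
      then have "(\<lambda>x. (Hm d x * \<rho> g * adj_mat (Hm d x)) $$ (i,j)) \<in> F"
        unfolding F_def by (intro insertI2 image_eqI[of _ _ "(g,(i,j))"]) auto
      then show ?thesis using x unfolding h_def by blast
    qed
    ultimately show ?thesis using dh by simp
  qed
  show ?thesis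
    using h hi h1 h2 ent unfolding Cs_def by (intro exI[of _ h] exI[of _ hinv]) auto
qed

end
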